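(* If a collection $\mathcal Q$ of probability measures on $\{0,1\}^{\mathbb N}$ is separable in its means, then $\mathcal Q$ is UME-learnable.
   Context: $\{0,1\}^{\mathbb N}$ carries the product $\sigma$-algebra. For a probability measure $\mu$ on $\{0,1\}^{\mathbb N}$, $\mathrm{Mean}(\mu)\in[0,1]^{\mathbb N}$ is the vector whose $j$-th coordinate is $\mathbb E[X_j]$ for $X\sim\mu$; $\mathrm{Mean}(\mathcal Q)=\{\mathrm{Mean}(\mu):\mu\in\mathcal Q\}$. For $\varepsilon>0$, a countable $\varepsilon$-cover of $\mathrm{Mean}(\mathcal Q)$ is a countable set $C\subset[0,1]^{\mathbb N}$ such that every $q\in\mathrm{Mean}(\mathcal Q)$ has some $p\in C$ with $\|q-p\|_\infty<\varepsilon$. $\mathcal Q$ is separable in its means if for every $\varepsilon>0$ a countable $\varepsilon$-cover of $\mathrm{Mean}(\mathcal Q)$ exists, and non-separable in its means otherwise. $\mathcal Q$ is UME-learnable if there exist (measurable) estimators $\mathcal A_n:(\{0,1\}^{\mathbb N})^n\to[0,1]^{\mathbb N}$, $n\in\mathbb N$, such that for every $\mu\in\mathcal Q$, $\mathbb E_{S\sim\mu^n}\|\mathcal A_n(S)-\mathrm{Mean}(\mu)\|_\infty\to0$ as $n\to\infty$, where $S$ consists of $n$ i.i.d. draws from $\mu$. *)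

theory Defs
  imports "HOL-Probability.Probability"
begin

text \<open>The Cantor space {0,1}^N with the product sigma-algebra; points are nat => bool,
  coordinate j being 1 iff x j.\<close>
definition cantor :: "(nat \<Rightarrow> bool) measure" where
  "cantor = PiM UNIV (\<lambda>_. count_space UNIV)"

definition prob_on_cantor :: "(nat \<Rightarrow> bool) measure \<Rightarrow> bool" where
  "prob_on_cantor \<mu> \<longleftrightarrow> sets \<mu> = sets cantor \<and> prob_space \<mu>"

definition Mean :: "(nat \<Rightarrow> bool) measure \<Rightarrow> nat \<Rightarrow> real" where
  "Mean \<mu> = (\<lambda>j. \<integral>x. (if x j then 1 else 0) \<partial>\<mu>)"

definition cube :: "(nat \<Rightarrow> real) set" where
  "cube = {p. \<forall>j. p j \<in> {0..1}}"

definition sup_dist :: "(nat \<Rightarrow> real) \<Rightarrow> (nat \<Rightarrow> real) \<Rightarrow> real" where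
  "sup_dist p q = (SUP j. \<bar>p j - q j\<bar>)"

definition separable_in_means :: "(nat \<Rightarrow> bool) measure set \<Rightarrow> bool" where
  "separable_in_means Q \<longleftrightarrow>
     (\<forall>\<epsilon>>0. \<exists>C. countable C \<and> C \<subseteq> cube \<and>
        (\<forall>q \<in> Mean ` Q. \<exists>p\<in>C. sup_dist q p < \<epsilon>))"

text \<open>A sample of size n is a function on {..<n}; n i.i.d. draws from mu is PiM {..<n} (\<lambda>_. mu).
  Estimators are measurable into [0,1]^N with the product Borel sigma-algebra.\<close>
definition UME_learnable :: "(nat \<Rightarrow> bool) measure set \<Rightarrow> bool" where
  "UME_learnable Q \<longleftrightarrow>
     (\<exists>A :: nat \<Rightarrow> (nat \<Rightarrow> nat \<Rightarrow> bool) \<Rightarrow> nat \<Rightarrow> real.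
        (\<forall>n. A n \<in> PiM {..<n} (\<lambda>_. cantor) \<rightarrow>\<^sub>M PiM UNIV (\<lambda>_. borel)) \<and>
        (\<forall>n S. A n S \<in> cube) \<and>
        (\<forall>\<mu>\<in>Q. (\<lambda>n. \<integral>\<^sup>+ S. ennreal (sup_dist (A n S) (Mean \<mu>)) \<partial>(PiM {..<n} (\<lambda>_. \<mu>)))
                   \<longlonglongrightarrow> 0))"

end

theory Submission
  imports Defs "HOL-Real_Asymp.Real_Asymp"
begin

lemma cube_abs: "p \<in> cube \<Longrightarrow> q \<in> cube \<Longrightarrow> \<bar>p j - q j\<bar> \<le> 1"
proof -
  assume "p \<in> cube" "q \<in> cube"
  then have "p j \<in> {0..1}" "q j \<in> {0..1}" unfolding cube_def by auto
  then show ?thesis by auto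
qed

lemma cube_bdd: "p \<in> cube \<Longrightarrow> q \<in> cube \<Longrightarrow> bdd_above (range (\<lambda>j. \<bar>p j - q j\<bar>))"
  by (intro bdd_aboveI[where M=1]) (auto simp: cube_abs)

lemma sd_le: "p \<in> cube \<Longrightarrow> q \<in> cube \<Longrightarrow> \<bar>p j - q j\<bar> \<le> sup_dist p q"
  unfolding sup_dist_def by (rule cSUP_upper[OF _ cube_bdd]) auto

lemma sd_ub: "(\<And>j. \<bar>p j - q j\<bar> \<le> B) \<Longrightarrow> sup_dist p q \<le> B"
  unfolding sup_dist_def by (rule cSUP_least) auto

lemma sd_nonneg: "p \<in> cube \<Longrightarrow> q \<in> cube \<Longrightarrow> 0 \<le> sup_dist p q"
  using sd_le[of p q 0] by linarith

lemma sd_le1: "p \<in> cube \<Longrightarrow> q \<in> cube \<Longrightarrow> sup_dist p q \<le> 1"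
  by (intro sd_ub) (auto simp: cube_abs)

lemma sd_sym: "sup_dist p q = sup_dist q p"
  unfolding sup_dist_def by (simp add: abs_minus_commute)

lemma sd_tri: "p \<in> cube \<Longrightarrow> q \<in> cube \<Longrightarrow> r \<in> cube \<Longrightarrow> sup_dist p r \<le> sup_dist p q + sup_dist q r"
proof (rule sd_ub)
  fix j assume "p \<in> cube" "q \<in> cube" "r \<in> cube"
  then show "\<bar>p j - r j\<bar> \<le> sup_dist p q + sup_dist q r"
    using sd_le[of p q j] sd_le[of q r j] by linarith
qed

lemma sd_wit: "p \<in> cube \<Longrightarrow> q \<in> cube \<Longrightarrow> \<eta> > 0 \<Longrightarrow> \<exists>t. sup_dist p q - \<eta> < \<bar>p t - q t\<bar>"
  unfolding sup_dist_def using less_cSUP_iff[of UNIV "\<lambda>j. \<bar>p j - q j\<bar>" "(SUP j. \<bar>p j - q j\<bar>) - \<eta>"] cube_bdd[of p q]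
  by auto

lemma cantor_space: "space cantor = UNIV"
  unfolding cantor_def by (simp add: space_PiM)

lemma ind_meas[measurable]: "(\<lambda>x. if x t then 1 else 0::real) \<in> borel_measurable cantor"
  unfolding cantor_def by measurable

lemma Mean_cube: assumes "prob_on_cantor \<mu>" shows "Mean \<mu> \<in> cube"
proof -
  interpret prob_space \<mu> using assms unfolding prob_on_cantor_def by auto
  have s: "sets \<mu> = sets cantor" using assms unfolding prob_on_cantor_def by auto
  { fix t
    have m: "(\<lambda>x. if x t then 1 else 0::real) \<in> borel_measurable \<mu>"
      using measurable_cong_sets[OF s refl] ind_meas by blast
    have "integrable \<mu> (\<lambda>x. if x t then 1 else 0::real)"
      by (rule integrable_const_bound[where B=1]) (use m in auto)
    have "0 \<le> Mean \<mu> t" unfolding Mean_def by (rule integral_nonneg_AE) auto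
    moreover have "Mean \<mu> t \<le> 1" unfolding Mean_def
      by (rule integral_le_const) (use \<open>integrable _ _\<close> in auto)
    ultimately have "Mean \<mu> t \<in> {0..1}" by auto }
  then show ?thesis unfolding cube_def by auto
qed

definition emp :: "nat \<Rightarrow> (nat \<Rightarrow> nat \<Rightarrow> bool) \<Rightarrow> nat \<Rightarrow> real" where
  "emp n S t = (\<Sum>k<n. if S k t then 1 else 0) / real n"

lemma var_bound:
  assumes "prob_on_cantor \<mu>" "n > 0"
  shows "integrable (PiM {..<n} (\<lambda>_. \<mu>)) (\<lambda>S. (emp n S t - Mean \<mu> t)\<^sup>2)"
    and "(\<integral>S. (emp n S t - Mean \<mu> t)\<^sup>2 \<partial>PiM {..<n} (\<lambda>_. \<mu>)) \<le> 1 / real n"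
proof -
  interpret prob_space \<mu> using assms unfolding prob_on_cantor_def by auto
  have s: "sets \<mu> = sets cantor" using assms unfolding prob_on_cantor_def by auto
  interpret PP: product_prob_space "\<lambda>_::nat. \<mu>" "{..<n}"
    by (simp add: product_prob_space_def product_sigma_finite_def product_prob_space_axioms_def
        prob_space_axioms sigma_finite_measure_axioms)
  define M where "M = PiM {..<n} (\<lambda>_. \<mu>)"
  interpret MP: prob_space M unfolding M_def by (rule prob_space_PiM) (rule prob_space_axioms)
  define q where "q = Mean \<mu> t"
  define Y where "Y x = (if x t then 1 else 0) - q" for x :: "nat \<Rightarrow> bool"
  have ind[measurable]: "(\<lambda>x. if x t then 1 else 0::real) \<in> borel_measurable \<mu>"
    using measurable_cong_sets[OF s refl] ind_meas by blast
  have Ym[measurable]: "Y \<in> borel_measurable \<mu>" unfolding Y_def by measurable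
  have q01: "q \<in> {0..1}" using Mean_cube[OF assms(1)] unfolding cube_def q_def by auto
  have Yb: "\<bar>Y x\<bar> \<le> 1" for x using q01 unfolding Y_def by auto
  have YY: "Y a * Y b \<le> 1" for a b
  proof -
    have "\<bar>Y a * Y b\<bar> \<le> 1" unfolding abs_mult using Yb[of a] Yb[of b] by (intro mult_le_one) auto
    then show ?thesis by linarith
  qed
  have Yint: "integrable \<mu> Y"
    by (rule integrable_const_bound[where B=1]) (use Yb in auto)
  have iint: "integrable \<mu> (\<lambda>x. if x t then 1 else 0::real)"
    by (rule integrable_const_bound[where B=1]) auto
  have EY: "integral\<^sup>L \<mu> Y = 0"
    unfolding Y_def using iint by (simp add: q_def Mean_def prob_space)
  have SkM[measurable]: "(\<lambda>S. Y (S k)) \<in> borel_measurable M" if "k < n" for k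
    unfolding M_def by (rule measurable_compose[OF _ Ym], rule measurable_component_singleton[where M="\<lambda>_. \<mu>"]) (use that in auto)
  have prodint: "integrable M (\<lambda>S. Y (S k) * Y (S l))" if "k < n" "l < n" for k l
  proof (rule MP.integrable_const_bound[where B=1])
    show "AE x in M. norm (Y (x k) * Y (x l)) \<le> 1"
      using Yb by (auto simp: abs_mult intro!: mult_le_one)
  qed (use that in measurable)
  have E: "(\<integral>S. Y (S k) * Y (S l) \<partial>M) \<le> (if k = l then 1 else 0)" if "k < n" "l < n" for k l
  proof (cases "k = l")
    case True
    have "(\<integral>S. Y (S k) * Y (S l) \<partial>M) \<le> 1"
      by (rule MP.integral_le_const) (use prodint[OF that] YY in auto)
    then show ?thesis using True by simp
  next
    case False
    define f where "f i = (if i = k \<or> i = l then Y else (\<lambda>_. 1))" for i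
    have "(\<Prod>i\<in>{..<n}. f i (S i)) = Y (S k) * Y (S l)" for S
    proof -
      have "(\<Prod>i\<in>{..<n}. f i (S i)) = (\<Prod>i\<in>{k,l}. f i (S i))"
        by (rule prod.mono_neutral_right) (use that in \<open>auto simp: f_def\<close>)
      also have "\<dots> = Y (S k) * Y (S l)" using False by (simp add: f_def)
      finally show ?thesis .
    qed
    then have "(\<integral>S. Y (S k) * Y (S l) \<partial>M) = (\<integral>S. (\<Prod>i\<in>{..<n}. f i (S i)) \<partial>M)" by simp
    also have "\<dots> = (\<Prod>i\<in>{..<n}. integral\<^sup>L \<mu> (f i))"
      unfolding M_def by (rule PP.product_integral_prod) (auto simp: f_def Yint)
    also have "\<dots> = 0"
      by (rule prod_zero) (use that EY in \<open>auto simp: f_def\<close>)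
    finally show ?thesis using False by simp
  qed
  have eq: "(emp n S t - q)\<^sup>2 = (\<Sum>k<n. \<Sum>l<n. Y (S k) * Y (S l)) / (real n)^2" for S
  proof -
    have "emp n S t - q = (\<Sum>k<n. Y (S k)) / real n"
      using assms(2) by (simp add: emp_def Y_def sum_subtractf field_simps)
    then show ?thesis by (simp add: power2_eq_square sum_product power_divide)
  qed
  have int2: "integrable M (\<lambda>S. (\<Sum>k<n. \<Sum>l<n. Y (S k) * Y (S l)) / (real n)^2)"
  proof -
    have "integrable M (\<lambda>S. \<Sum>k<n. \<Sum>l<n. Y (S k) * Y (S l))"
      apply (rule Bochner_Integration.integrable_sum)
      apply (rule Bochner_Integration.integrable_sum)
      apply (rule prodint)
      apply auto
      done
    then show ?thesis by simp
  qed
  show "integrable (PiM {..<n} (\<lambda>_. \<mu>)) (\<lambda>S. (emp n S t - Mean \<mu> t)\<^sup>2)"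
    using int2 unfolding M_def q_def[symmetric] eq .
  have "(\<integral>S. (emp n S t - q)\<^sup>2 \<partial>M) = (\<Sum>k<n. \<Sum>l<n. \<integral>S. Y (S k) * Y (S l) \<partial>M) / (real n)^2"
  proof -
    have "(\<integral>S. (\<Sum>k<n. \<Sum>l<n. Y (S k) * Y (S l)) \<partial>M) = (\<Sum>k<n. \<integral>S. (\<Sum>l<n. Y (S k) * Y (S l)) \<partial>M)"
      by (rule Bochner_Integration.integral_sum) (auto intro!: Bochner_Integration.integrable_sum prodint)
    also have "\<dots> = (\<Sum>k<n. \<Sum>l<n. \<integral>S. Y (S k) * Y (S l) \<partial>M)"
      by (intro sum.cong refl Bochner_Integration.integral_sum) (auto intro!: prodint)
    finally show ?thesis unfolding eq integral_divide_zero by simp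
  qed
  also have "\<dots> \<le> (\<Sum>k<n. \<Sum>l<n. (if k = l then 1 else 0)) / (real n)^2"
    by (intro divide_right_mono sum_mono E) auto
  also have "\<dots> = 1 / real n"
    using assms(2) by (simp add: power2_eq_square)
  finally show "(\<integral>S. (emp n S t - Mean \<mu> t)\<^sup>2 \<partial>PiM {..<n} (\<lambda>_. \<mu>)) \<le> 1 / real n"
    unfolding M_def q_def .
qed

lemma amgm_abs: "(\<delta>::real) > 0 \<Longrightarrow> \<bar>x\<bar> \<le> \<delta>/2 + x\<^sup>2 / (2*\<delta>)"
proof -
  assume d: "\<delta> > 0"
  have "0 \<le> (\<bar>x\<bar> - \<delta>)\<^sup>2" by simp
  then have "2*\<delta>*\<bar>x\<bar> \<le> x\<^sup>2 + \<delta>\<^sup>2" by (simp add: power2_eq_square algebra_simps)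
  then show ?thesis using d by (simp add: field_simps power2_eq_square)
qed

lemma select_bound:
  fixes c :: "nat \<Rightarrow> nat \<Rightarrow> real" and e q :: "nat \<Rightarrow> real"
  assumes cc: "\<And>i. c i \<in> cube" and q: "q \<in> cube" and T: "finite T"
    and W: "\<And>i j. i \<le> N \<Longrightarrow> j \<le> N \<Longrightarrow> W i j \<in> T \<and> sup_dist (c i) (c j) - \<eta> < \<bar>c i (W i j) - c j (W i j)\<bar>"
    and ih: "ih \<le> N"
    and ihmin: "\<And>j. j \<le> N \<Longrightarrow> Max ((\<lambda>t. \<bar>c ih t - e t\<bar>) ` T) \<le> Max ((\<lambda>t. \<bar>c j t - e t\<bar>) ` T)"
    and i0: "i0 \<le> N" and d: "\<delta> > 0"
  shows "sup_dist (c ih) q \<le> 3 * sup_dist (c i0) q + \<eta> + \<delta> + (\<Sum>t\<in>T. (e t - q t)\<^sup>2) / \<delta>"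
proof -
  define sc where "sc i = Max ((\<lambda>t. \<bar>c i t - e t\<bar>) ` T)" for i
  define \<Sigma> where "\<Sigma> = (\<Sum>t\<in>T. (e t - q t)\<^sup>2)"
  define t0 where "t0 = W ih i0"
  have t0: "t0 \<in> T" "sup_dist (c ih) (c i0) - \<eta> < \<bar>c ih t0 - c i0 t0\<bar>"
    using W[OF ih i0] unfolding t0_def by auto
  have scle: "\<bar>c i t - e t\<bar> \<le> sc i" if "t \<in> T" for i t
    unfolding sc_def using T that by (intro Max_ge) auto
  have "\<bar>c ih t0 - c i0 t0\<bar> \<le> \<bar>c ih t0 - e t0\<bar> + \<bar>c i0 t0 - e t0\<bar>" by linarith
  also have "\<dots> \<le> sc ih + sc i0" using scle[OF t0(1)] by (intro add_mono) auto
  also have "\<dots> \<le> 2 * sc i0" using ihmin[OF i0] unfolding sc_def by simp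
  finally have 1: "sup_dist (c ih) (c i0) < 2 * sc i0 + \<eta>" using t0(2) by linarith
  have "sc i0 \<le> sup_dist (c i0) q + (\<delta>/2 + \<Sigma>/(2*\<delta>))"
    unfolding sc_def
  proof (subst Max_le_iff)
    show "finite ((\<lambda>t. \<bar>c i0 t - e t\<bar>) ` T)" using T by simp
    show "(\<lambda>t. \<bar>c i0 t - e t\<bar>) ` T \<noteq> {}" using t0 by auto
    show "\<forall>a\<in>(\<lambda>t. \<bar>c i0 t - e t\<bar>) ` T. a \<le> sup_dist (c i0) q + (\<delta> / 2 + \<Sigma> / (2 * \<delta>))"
    proof
      fix a assume "a \<in> (\<lambda>t. \<bar>c i0 t - e t\<bar>) ` T"
      then obtain t where t: "t \<in> T" "a = \<bar>c i0 t - e t\<bar>" by auto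
      have "(e t - q t)\<^sup>2 \<le> \<Sigma>" unfolding \<Sigma>_def using T t(1)
        by (intro member_le_sum) auto
      then have "(e t - q t)\<^sup>2 / (2*\<delta>) \<le> \<Sigma> / (2*\<delta>)" using d by (intro divide_right_mono) auto
      then have "\<bar>e t - q t\<bar> \<le> \<delta>/2 + \<Sigma>/(2*\<delta>)" using amgm_abs[OF d, of "e t - q t"] by linarith
      moreover have "\<bar>c i0 t - q t\<bar> \<le> sup_dist (c i0) q" by (rule sd_le[OF cc q])
      ultimately show "a \<le> sup_dist (c i0) q + (\<delta> / 2 + \<Sigma> / (2 * \<delta>))" using t(2) by linarith
    qed
  qed
  moreover have "sup_dist (c ih) q \<le> sup_dist (c ih) (c i0) + sup_dist (c i0) q"
    by (rule sd_tri[OF cc cc q])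
  ultimately have "sup_dist (c ih) q \<le> 3 * sup_dist (c i0) q + \<eta> + \<delta> + \<Sigma>/\<delta>"
  proof -
    assume a: "sc i0 \<le> sup_dist (c i0) q + (\<delta>/2 + \<Sigma>/(2*\<delta>))"
      and b: "sup_dist (c ih) q \<le> sup_dist (c ih) (c i0) + sup_dist (c i0) q"
    have "2 * (\<Sigma>/(2*\<delta>)) = \<Sigma>/\<delta>" using d by simp
    then show ?thesis using a b 1 by linarith
  qed
  then show ?thesis unfolding \<Sigma>_def .
qed

lemma lim1: "(\<lambda>n. (real n powr (1/3) + 1)\<^sup>2 / real n) \<longlonglongrightarrow> 0"
  by real_asymp
lemma lim2: "filterlim (\<lambda>n. real n powr (1/3)) at_top sequentially"
  by real_asymp
lemma lim3: "(\<lambda>n. 1 / (real n + 1)) \<longlonglongrightarrow> 0"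
  by real_asymp

lemma emp_meas[measurable]: "(\<lambda>S. emp n S t) \<in> borel_measurable (PiM {..<n} (\<lambda>_. cantor))"
proof -
  have "(\<lambda>S. if S k t then 1 else 0::real) \<in> borel_measurable (PiM {..<n} (\<lambda>_. cantor))" if "k<n" for k
    by (rule measurable_compose[OF _ ind_meas], rule measurable_component_singleton[where M="\<lambda>_. cantor"]) (use that in auto)
  then show ?thesis unfolding emp_def
    by (intro borel_measurable_divide borel_measurable_sum borel_measurable_const) auto
qed

lemma est_meas:
  fixes c :: "nat \<Rightarrow> nat \<Rightarrow> real"
  assumes fin: "finite T"
  shows "(\<lambda>S. LEAST i. i \<le> N \<and> (\<forall>j\<le>N. Max ((\<lambda>t. \<bar>c i t - emp n S t\<bar>) ` T) \<le> Max ((\<lambda>t. \<bar>c j t - emp n S t\<bar>) ` T)))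
     \<in> PiM {..<n} (\<lambda>_. cantor) \<rightarrow>\<^sub>M count_space UNIV"
proof -
  define f where "f i S = Max ((\<lambda>t. \<bar>c i t - emp n S t\<bar>) ` T)" for i S
  have fm[measurable]: "f i \<in> borel_measurable (PiM {..<n} (\<lambda>_. cantor))" for i
    unfolding f_def by (rule borel_measurable_Max[OF fin]) simp
  have p1: "Measurable.pred (PiM {..<n} (\<lambda>_. cantor)) (\<lambda>S. f i S \<le> f j S)" for i j
    using borel_measurable_le[OF fm[of i] fm[of j]] by (simp add: Measurable.pred_def)
  have p2: "Measurable.pred (PiM {..<n} (\<lambda>_. cantor)) (\<lambda>S. \<forall>j\<in>{..N}. f i S \<le> f j S)" for i
    by (rule pred_intros_finite(3)) (auto intro: p1)
  have p3: "Measurable.pred (PiM {..<n} (\<lambda>_. cantor)) (\<lambda>S. i \<le> N \<and> (\<forall>j\<in>{..N}. f i S \<le> f j S))" for i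
    by (cases "i \<le> N") (use p2 in auto)
  have "(\<lambda>S. LEAST i. i \<le> N \<and> (\<forall>j\<in>{..N}. f i S \<le> f j S)) \<in> PiM {..<n} (\<lambda>_. cantor) \<rightarrow>\<^sub>M count_space UNIV"
    by (rule measurable_Least) (rule p3)
  then show ?thesis unfolding f_def atMost_iff Ball_def .
qed

theorem theorem2:
  assumes "\<forall>\<mu>\<in>Q. prob_on_cantor \<mu>"
    and "separable_in_means Q"
  shows "UME_learnable Q"
proof -
  have "\<forall>k::nat. \<exists>C. countable C \<and> C \<subseteq> cube \<and> (\<forall>q\<in>Mean ` Q. \<exists>p\<in>C. sup_dist q p < 1/(real k+1))"
  proof
    fix k :: nat
    have "1/(real k+1) > 0" by simp
    then show "\<exists>C. countable C \<and> C \<subseteq> cube \<and> (\<forall>q\<in>Mean ` Q. \<exists>p\<in>C. sup_dist q p < 1/(real k+1))"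
      using assms(2) unfolding separable_in_means_def by blast
  qed
  then obtain Ck where Ck: "\<And>k. countable (Ck k)" "\<And>k. Ck k \<subseteq> cube"
    "\<And>k q. q \<in> Mean ` Q \<Longrightarrow> \<exists>p\<in>Ck k. sup_dist q p < 1/(real k+1)"
    by metis
  define C' where "C' = insert (\<lambda>_. 0) (\<Union>k. Ck k)"
  have C'c: "countable C'" unfolding C'_def using Ck(1) by auto
  have C'ne: "C' \<noteq> {}" unfolding C'_def by auto
  have C'cube: "C' \<subseteq> cube" using Ck(2) by (auto simp: C'_def cube_def)
  define c where "c = from_nat_into C'"
  have cc: "\<And>i. c i \<in> cube" using from_nat_into[OF C'ne] C'cube c_def by auto
  have approx: "\<exists>i. sup_dist (c i) (Mean \<mu>) < \<epsilon>" if mQ: "\<mu> \<in> Q" and epos: "\<epsilon> > 0" for \<mu> \<epsilon>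
  proof -
    obtain k :: nat where k: "inverse (real (Suc k)) < \<epsilon>" using reals_Archimedean[OF epos] by auto
    then have k': "1/(real k+1) < \<epsilon>" by (simp add: field_simps)
    obtain p where p: "p \<in> Ck k" "sup_dist (Mean \<mu>) p < 1/(real k+1)" using Ck(3)[of "Mean \<mu>" k] mQ by auto
    then have "p \<in> C'" unfolding C'_def by auto
    then have "c (to_nat_on C' p) = p" unfolding c_def by (rule from_nat_into_to_nat_on[OF C'c])
    then show ?thesis using p k' sd_sym[of p "Mean \<mu>"] by (intro exI[of _ "to_nat_on C' p"]) auto
  qed
  define W where "W m i j = (SOME t. sup_dist (c i) (c j) - 1/(real m+1) < \<bar>c i t - c j t\<bar>)" for m i j
  have Wp: "sup_dist (c i) (c j) - 1/(real m+1) < \<bar>c i (W m i j) - c j (W m i j)\<bar>" for m i j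
    unfolding W_def by (rule someI_ex, rule sd_wit[OF cc cc]) simp
  define N where "N n = nat \<lfloor>real n powr (1/3)\<rfloor>" for n :: nat
  define T where "T n = (\<lambda>(i,j). W n i j) ` ({..N n} \<times> {..N n})" for n
  have Tfin: "finite (T n)" for n by (simp add: T_def)
  have Tcard: "card (T n) \<le> (N n + 1)^2" for n
  proof -
    have "card (T n) \<le> card ({..N n} \<times> {..N n})" unfolding T_def by (rule card_image_le) simp
    also have "\<dots> = (N n + 1)^2" by (simp add: power2_eq_square)
    finally show ?thesis .
  qed
  have TW: "W n i j \<in> T n" if "i \<le> N n" "j \<le> N n" for n i j
    using that unfolding T_def by force
  define sc where "sc n S i = Max ((\<lambda>t. \<bar>c i t - emp n S t\<bar>) ` T n)" for n S i
  define idx where "idx n S = (LEAST i. i \<le> N n \<and> (\<forall>j\<le>N n. sc n S i \<le> sc n S j))" for n S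
  define A where "A n S = c (idx n S)" for n S
  have idx: "idx n S \<le> N n \<and> (\<forall>j\<le>N n. sc n S (idx n S) \<le> sc n S j)" for n S
  proof -
    have "\<exists>i. i \<le> N n \<and> (\<forall>j\<le>N n. sc n S i \<le> sc n S j)"
    proof -
      let ?m = "Min (sc n S ` {..N n})"
      have "?m \<in> sc n S ` {..N n}" by (rule Min_in) auto
      then obtain i where "i \<le> N n" "sc n S i = ?m" by (metis atMost_iff imageE)
      moreover have "\<forall>j\<le>N n. ?m \<le> sc n S j" by (auto intro: Min_le)
      ultimately show ?thesis by auto
    qed
    then show ?thesis unfolding idx_def by (rule LeastI_ex)
  qed
  have idxm: "idx n \<in> PiM {..<n} (\<lambda>_. cantor) \<rightarrow>\<^sub>M count_space UNIV" for n
    unfolding idx_def sc_def by (rule est_meas[OF Tfin])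
  have Am: "A n \<in> PiM {..<n} (\<lambda>_. cantor) \<rightarrow>\<^sub>M PiM UNIV (\<lambda>_. borel)" for n
    unfolding A_def by (rule measurable_compose[OF idxm]) (simp add: space_PiM)
  show ?thesis unfolding UME_learnable_def
  proof (intro exI[of _ A] conjI allI ballI)
    fix n show "A n \<in> PiM {..<n} (\<lambda>_. cantor) \<rightarrow>\<^sub>M PiM UNIV (\<lambda>_. borel)" by (rule Am)
  next
    fix n S show "A n S \<in> cube" unfolding A_def by (rule cc)
  next
    fix \<mu> assume \<mu>: "\<mu> \<in> Q"
    then have pc: "prob_on_cantor \<mu>" using assms(1) by auto
    interpret prob_space \<mu> using pc unfolding prob_on_cantor_def by auto
    define q where "q = Mean \<mu>"
    have qc: "q \<in> cube" unfolding q_def by (rule Mean_cube[OF pc])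
    have sM: "sets (PiM {..<n} (\<lambda>_. \<mu>)) = sets (PiM {..<n} (\<lambda>_. cantor))" for n
      by (rule sets_PiM_cong) (use pc in \<open>auto simp: prob_on_cantor_def\<close>)
    have key: "(\<integral>\<^sup>+S. ennreal (sup_dist (A n S) q) \<partial>PiM {..<n} (\<lambda>_. \<mu>))
       \<le> ennreal (3 * sup_dist (c i0) q + 1/(real n+1) + \<delta> + real (card (T n)) / real n / \<delta>)"
      if n0: "n > 0" and i0: "i0 \<le> N n" and d: "\<delta> > 0" for n i0 \<delta>
    proof -
      define M where "M = PiM {..<n} (\<lambda>_. \<mu>)"
      interpret MP: prob_space M unfolding M_def by (rule prob_space_PiM) (rule prob_space_axioms)
      have idxM: "idx n \<in> M \<rightarrow>\<^sub>M count_space UNIV"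
        using idxm[of n] measurable_cong_sets[OF sM[of n] refl] unfolding M_def by blast
      have meas: "(\<lambda>S. sup_dist (A n S) q) \<in> borel_measurable M"
        unfolding A_def by (rule measurable_compose[OF idxM]) simp
      have int1: "integrable M (\<lambda>S. sup_dist (A n S) q)"
        by (rule MP.integrable_const_bound[where B=1])
          (use meas cc qc sd_le1 sd_nonneg in \<open>auto simp: A_def\<close>)
      define G where "G S = (\<Sum>t\<in>T n. (emp n S t - q t)\<^sup>2)" for S
      define K where "K = 3 * sup_dist (c i0) q + 1/(real n+1) + \<delta>"
      have sqint: "integrable M (\<lambda>S. (emp n S t - q t)\<^sup>2)" for t
        using var_bound(1)[OF pc n0, of t] unfolding M_def q_def .
      have sqle: "(\<integral>S. (emp n S t - q t)\<^sup>2 \<partial>M) \<le> 1 / real n" for t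
        using var_bound(2)[OF pc n0, of t] unfolding M_def q_def .
      have Gint: "integrable M G" unfolding G_def
        by (rule Bochner_Integration.integrable_sum) (rule sqint)
      have Bint: "integrable M (\<lambda>S. K + G S / \<delta>)"
        by (rule Bochner_Integration.integrable_add[OF MP.integrable_const integrable_divide_zero]) (rule Gint)
      have pw: "sup_dist (A n S) q \<le> K + G S / \<delta>" for S
        unfolding A_def K_def G_def
      proof (rule select_bound[OF cc qc Tfin, where W="W n" and N="N n" and \<eta>="1/(real n+1)"])
        show "\<And>i j. i \<le> N n \<Longrightarrow> j \<le> N n \<Longrightarrow> W n i j \<in> T n \<and> sup_dist (c i) (c j) - 1/(real n+1) < \<bar>c i (W n i j) - c j (W n i j)\<bar>"
          using TW Wp by blast
        show "idx n S \<le> N n" using idx by blast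
        show "\<And>j. j \<le> N n \<Longrightarrow> Max ((\<lambda>t. \<bar>c (idx n S) t - emp n S t\<bar>) ` T n) \<le> Max ((\<lambda>t. \<bar>c j t - emp n S t\<bar>) ` T n)"
          using idx[of n S] unfolding sc_def by blast
      qed (use i0 d in auto)
      have eqn: "(\<integral>\<^sup>+S. ennreal (sup_dist (A n S) q) \<partial>M) = ennreal (\<integral>S. sup_dist (A n S) q \<partial>M)"
        by (rule nn_integral_eq_integral[OF int1]) (use cc qc sd_nonneg in \<open>auto simp: A_def\<close>)
      have "(\<integral>S. sup_dist (A n S) q \<partial>M) \<le> (\<integral>S. K + G S / \<delta> \<partial>M)"
        by (rule integral_mono[OF int1 Bint pw])
      also have "(\<integral>S. K + G S / \<delta> \<partial>M) = K + (\<integral>S. G S \<partial>M) / \<delta>"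
        using Gint by (simp add: Bochner_Integration.integral_add MP.prob_space)
      also have "(\<integral>S. G S \<partial>M) = (\<Sum>t\<in>T n. \<integral>S. (emp n S t - q t)\<^sup>2 \<partial>M)"
        unfolding G_def by (rule Bochner_Integration.integral_sum) (rule sqint)
      also have "(\<Sum>t\<in>T n. \<integral>S. (emp n S t - q t)\<^sup>2 \<partial>M) \<le> (\<Sum>t\<in>T n. 1 / real n)"
        by (rule sum_mono) (rule sqle)
      finally have rb: "(\<integral>S. sup_dist (A n S) q \<partial>M) \<le> K + (\<Sum>t\<in>T n. 1 / real n) / \<delta>"
        using d by (simp add: divide_right_mono)
      have "(\<Sum>t\<in>T n. 1 / real n) = real (card (T n)) / real n" by simp
      then show ?thesis
        using rb unfolding eqn[unfolded M_def] K_def M_def by (intro ennreal_leI) simp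
    qed
    show "(\<lambda>n. \<integral>\<^sup>+ S. ennreal (sup_dist (A n S) (Mean \<mu>)) \<partial>PiM {..<n} (\<lambda>_. \<mu>)) \<longlonglongrightarrow> 0"
      unfolding q_def[symmetric]
    proof (rule order_tendstoI)
      fix a :: ennreal assume "a < 0" then show "eventually (\<lambda>n. a < (\<integral>\<^sup>+ S. ennreal (sup_dist (A n S) q) \<partial>PiM {..<n} (\<lambda>_. \<mu>))) sequentially"
        by simp
    next
      fix a :: ennreal assume a: "0 < a"
      obtain b where b: "0 < b" "b < a" using dense[OF a] by blast
      define \<epsilon> where "\<epsilon> = enn2real b"
      have bt: "b \<noteq> top" using b(2) by (metis top.not_eq_extremum top_greatest order.strict_trans2)
      have be: "b = ennreal \<epsilon>" unfolding \<epsilon>_def using bt by (metis ennreal_enn2real_if)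
      have ep: "\<epsilon> > 0" unfolding \<epsilon>_def using b(1) bt by (simp add: enn2real_positive_iff less_top)
      obtain i0 where i0: "sup_dist (c i0) q < \<epsilon>/12" using approx[OF \<mu>, of "\<epsilon>/12"] ep unfolding q_def by auto
      define \<delta> where "\<delta> = \<epsilon>/4"
      have dp: "\<delta> > 0" using ep by (simp add: \<delta>_def)
      have ev1: "eventually (\<lambda>n. real i0 \<le> real n powr (1/3)) sequentially"
        using lim2 unfolding filterlim_at_top by blast
      have ev2: "eventually (\<lambda>n. (real n powr (1/3) + 1)\<^sup>2 / real n < \<delta> * (\<epsilon>/4)) sequentially"
        using order_tendstoD(2)[OF lim1, of "\<delta> * (\<epsilon>/4)"] dp ep by auto
      have ev3: "eventually (\<lambda>n. 1 / (real n + 1) < \<epsilon>/4) sequentially"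
        using order_tendstoD(2)[OF lim3, of "\<epsilon>/4"] ep by auto
      have ev4: "eventually (\<lambda>n. n > 0) sequentially" by (rule eventually_gt_at_top)
      show "eventually (\<lambda>n. (\<integral>\<^sup>+ S. ennreal (sup_dist (A n S) q) \<partial>PiM {..<n} (\<lambda>_. \<mu>)) < a) sequentially"
        using ev1 ev2 ev3 ev4
      proof eventually_elim
        case (elim n)
        define x where "x = real n powr (1/3)"
        have x0: "x \<ge> 0" unfolding x_def by simp
        have Ni0: "i0 \<le> N n" unfolding N_def using elim(1) le_nat_floor by blast
        have Nx: "real (N n) \<le> x" unfolding N_def x_def[symmetric] using x0 by linarith
        have "real (card (T n)) \<le> (real (N n) + 1)\<^sup>2"
          using Tcard[of n] by (metis of_nat_1 of_nat_add of_nat_le_iff of_nat_power)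
        also have "\<dots> \<le> (x + 1)\<^sup>2" using Nx by (intro power_mono) auto
        finally have "real (card (T n)) / real n \<le> (x + 1)\<^sup>2 / real n"
          by (intro divide_right_mono) auto
        also have "\<dots> < \<delta> * (\<epsilon>/4)" using elim(2) unfolding x_def .
        finally have f1: "real (card (T n)) / real n < \<delta> * (\<epsilon>/4)" .
        have "real (card (T n)) / real n / \<delta> < \<epsilon>/4"
          using f1 dp by (subst pos_divide_less_eq) (auto simp: mult.commute)
        then have lt: "3 * sup_dist (c i0) q + 1/(real n+1) + \<delta> + real (card (T n)) / real n / \<delta> < \<epsilon>"
          using i0 elim(3) unfolding \<delta>_def by linarith
        have "(\<integral>\<^sup>+ S. ennreal (sup_dist (A n S) q) \<partial>PiM {..<n} (\<lambda>_. \<mu>))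
           \<le> ennreal (3 * sup_dist (c i0) q + 1/(real n+1) + \<delta> + real (card (T n)) / real n / \<delta>)"
          by (rule key[OF elim(4) Ni0 dp])
        also have "\<dots> < ennreal \<epsilon>" using lt ep by (intro ennreal_lessI)
        also have "\<dots> < a" using be b(2) by simp
        finally show ?case .
      qed
    qed
  qed
qed

end
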